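(* Let $l,k\ge1$ and let $u=\mathrm{sgrad}\,f$, $v=\mathrm{sgrad}\,h$ with $f\in\mathcal Y_l$, $h\in\mathcal Y_k$. Then the operator $B$ on $\mathrm{SVect}(\mathbb S^2)\otimes\mathbb C$ defined by $\langle B(u,v),w\rangle=\langle u,[v,w]\rangle$ for all $w$ satisfies $$k(k+1)\,B(u,v)=-l(l+1)\,B(v,u).$$
   Context: $\mathbb S^2$ with spherical coordinates $(\theta,\phi)$, round metric $d\theta^2+\sin^2\theta\,d\phi^2$, area form $\mu=\sin\theta\,d\theta\wedge d\phi$. $\mathrm{SVect}(\mathbb S^2)$: divergence-free vector fields, with inner product $\langle u,v\rangle=\int_{\mathbb S^2}g(u,v)\mu$ (extended complex-bilinearly or Hermitian; the identity is linear) and Lie bracket $[\cdot,\cdot]$ of vector fields (either sign convention). $\mathrm{sgrad}\,f=\frac1{\sin\theta}(\partial_\phi f\,\partial_\theta-\partial_\theta f\,\partial_\phi)$. $\mathcal Y_l$ is the span of the spherical harmonics $Y^m_l$, $-l\le m\le l$, i.e. the eigenspace $\Delta f=-l(l+1)f$ of the Laplace–Beltrami operator. *)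

theory Defs
  imports "HOL-Analysis.Analysis"
begin

definition pd :: "3 \<Rightarrow> (real^3 \<Rightarrow> complex) \<Rightarrow> real^3 \<Rightarrow> complex" where
  "pd i G x = frechet_derivative G (at x) (axis i 1)"

fun iterD :: "3 list \<Rightarrow> (real^3 \<Rightarrow> complex) \<Rightarrow> real^3 \<Rightarrow> complex" where
  "iterD [] G = G"
| "iterD (i # is) G = pd i (iterD is G)"

definition smooth3 :: "(real^3 \<Rightarrow> complex) \<Rightarrow> bool" where
  "smooth3 G \<longleftrightarrow> (\<forall>is. \<forall>x. iterD is G differentiable (at x))"

definition sph :: "real \<Rightarrow> real \<Rightarrow> real^3" where
  "sph \<theta> \<phi> = vector [sin \<theta> * cos \<phi>, sin \<theta> * sin \<phi>, cos \<theta>]"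

text \<open>Coordinate vector fields d/dtheta and d/dphi, as ambient vectors.\<close>
definition eth :: "real \<Rightarrow> real \<Rightarrow> real^3" where
  "eth \<theta> \<phi> = vector [cos \<theta> * cos \<phi>, cos \<theta> * sin \<phi>, - sin \<theta>]"

definition eph :: "real \<Rightarrow> real \<Rightarrow> real^3" where
  "eph \<theta> \<phi> = vector [- sin \<theta> * sin \<phi>, sin \<theta> * cos \<phi>, 0]"

definition chart :: "(real \<times> real) set" where
  "chart = {0<..<pi} \<times> UNIV"

definition dth :: "(real \<Rightarrow> real \<Rightarrow> complex) \<Rightarrow> real \<Rightarrow> real \<Rightarrow> complex" where
  "dth g \<theta> \<phi> = vector_derivative (\<lambda>t. g t \<phi>) (at \<theta>)"

definition dph :: "(real \<Rightarrow> real \<Rightarrow> complex) \<Rightarrow> real \<Rightarrow> real \<Rightarrow> complex" where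
  "dph g \<theta> \<phi> = vector_derivative (\<lambda>t. g \<theta> t) (at \<phi>)"

definition pb :: "(real^3 \<Rightarrow> complex) \<Rightarrow> real \<Rightarrow> real \<Rightarrow> complex" where
  "pb F \<theta> \<phi> = F (sph \<theta> \<phi>)"

definition LB :: "(real \<Rightarrow> real \<Rightarrow> complex) \<Rightarrow> real \<Rightarrow> real \<Rightarrow> complex" where
  "LB g \<theta> \<phi> = dth (\<lambda>t p. of_real (sin t) * dth g t p) \<theta> \<phi> / of_real (sin \<theta>)
              + dph (dph g) \<theta> \<phi> / of_real ((sin \<theta>)\<^sup>2)"

text \<open>Yl l: smooth (complex) functions on the sphere (given by a smooth ambient
  representative, only its values on the sphere matter) that are eigenfunctions
  of the Laplace-Beltrami operator with eigenvalue -l(l+1).\<close>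
definition Yl :: "nat \<Rightarrow> (real^3 \<Rightarrow> complex) set" where
  "Yl l = {F. smooth3 F \<and>
     (\<forall>(\<theta>,\<phi>)\<in>chart. LB (pb F) \<theta> \<phi> = - of_nat (l * (l + 1)) * pb F \<theta> \<phi>)}"

text \<open>A (complexified) vector field a d/dtheta + b d/dphi, given by its coordinate components.\<close>
type_synonym vf = "(real \<Rightarrow> real \<Rightarrow> complex) \<times> (real \<Rightarrow> real \<Rightarrow> complex)"

text \<open>Smoothness on the whole sphere (including the poles): the field, viewed as
  an ambient vector field along the sphere, is the restriction of a smooth map R^3 \<rightarrow> C^3.\<close>
definition smooth_vf :: "vf \<Rightarrow> bool" where
  "smooth_vf X \<longleftrightarrow> (\<exists>V :: 3 \<Rightarrow> real^3 \<Rightarrow> complex. (\<forall>i. smooth3 (V i)) \<and>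
     (\<forall>(\<theta>,\<phi>)\<in>chart. \<forall>i. V i (sph \<theta> \<phi>) =
        fst X \<theta> \<phi> * of_real (eth \<theta> \<phi> $ i) + snd X \<theta> \<phi> * of_real (eph \<theta> \<phi> $ i)))"

text \<open>Divergence w.r.t. the area form sin theta dtheta dphi.\<close>
definition divg :: "vf \<Rightarrow> real \<Rightarrow> real \<Rightarrow> complex" where
  "divg X \<theta> \<phi> = dth (\<lambda>t p. of_real (sin t) * fst X t p) \<theta> \<phi> / of_real (sin \<theta>)
                 + dph (snd X) \<theta> \<phi>"

definition SVect :: "vf set" where
  "SVect = {X. smooth_vf X \<and> (\<forall>(\<theta>,\<phi>)\<in>chart. divg X \<theta> \<phi> = 0)}"

definition bracket :: "vf \<Rightarrow> vf \<Rightarrow> vf" where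
  "bracket X Y =
    ((\<lambda>\<theta> \<phi>. fst X \<theta> \<phi> * dth (fst Y) \<theta> \<phi> + snd X \<theta> \<phi> * dph (fst Y) \<theta> \<phi>
            - fst Y \<theta> \<phi> * dth (fst X) \<theta> \<phi> - snd Y \<theta> \<phi> * dph (fst X) \<theta> \<phi>),
     (\<lambda>\<theta> \<phi>. fst X \<theta> \<phi> * dth (snd Y) \<theta> \<phi> + snd X \<theta> \<phi> * dph (snd Y) \<theta> \<phi>
            - fst Y \<theta> \<phi> * dth (snd X) \<theta> \<phi> - snd Y \<theta> \<phi> * dph (snd X) \<theta> \<phi>))"

text \<open>Round metric d theta^2 + sin^2 theta d phi^2, extended complex-bilinearly.\<close>
definition gmet :: "vf \<Rightarrow> vf \<Rightarrow> real \<Rightarrow> real \<Rightarrow> complex" where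
  "gmet X Y \<theta> \<phi> = fst X \<theta> \<phi> * fst Y \<theta> \<phi>
                   + of_real ((sin \<theta>)\<^sup>2) * (snd X \<theta> \<phi> * snd Y \<theta> \<phi>)"

definition ip :: "vf \<Rightarrow> vf \<Rightarrow> complex" where
  "ip X Y = integral (cbox (0, 0) (pi, 2 * pi))
              (\<lambda>(\<theta>, \<phi>). gmet X Y \<theta> \<phi> * of_real (sin \<theta>))"

definition sgrad :: "(real^3 \<Rightarrow> complex) \<Rightarrow> vf" where
  "sgrad F = ((\<lambda>\<theta> \<phi>. dph (pb F) \<theta> \<phi> / of_real (sin \<theta>)),
              (\<lambda>\<theta> \<phi>. - dth (pb F) \<theta> \<phi> / of_real (sin \<theta>)))"

end

theory Submission
  imports Defs "HOL-Analysis.Analysis"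
begin

lemma iterD_pd: "iterD is (pd i G) = iterD (is @ [i]) G"
  by (induction "is") auto

lemma smooth3_diff: "smooth3 G \<Longrightarrow> G differentiable (at x)"
  unfolding smooth3_def by (metis iterD.simps(1))

lemma smooth3_pd: "smooth3 G \<Longrightarrow> smooth3 (pd i G)"
  unfolding smooth3_def by (simp add: iterD_pd)

lemma smooth3_cont: "smooth3 G \<Longrightarrow> continuous_on UNIV G"
  by (meson continuous_at_imp_continuous_on differentiable_imp_continuous_within smooth3_diff)

lemma vec3_expand: "(y::real^3) = (y$1) *\<^sub>R axis 1 1 + (y$2) *\<^sub>R axis 2 1 + (y$3) *\<^sub>R axis 3 1"
  by (simp add: vec_eq_iff forall_3 axis_def)

lemma fd_expand:
  assumes "G differentiable (at x)"
  shows "frechet_derivative G (at x) y = (\<Sum>i\<in>UNIV. pd i G x * of_real (y$i))"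
proof -
  have lin: "linear (frechet_derivative G (at x))"
    using assms frechet_derivative_works has_derivative_linear by blast
  have "frechet_derivative G (at x) y = frechet_derivative G (at x) ((y$1) *\<^sub>R axis 1 1 + (y$2) *\<^sub>R axis 2 1 + (y$3) *\<^sub>R axis 3 1)"
    using vec3_expand[of y] by simp
  also have "\<dots> = (y$1) *\<^sub>R pd 1 G x + (y$2) *\<^sub>R pd 2 G x + (y$3) *\<^sub>R pd 3 G x"
    by (simp add: linear_add[OF lin] linear_scale[OF lin] pd_def)
  finally show ?thesis by (simp add: sum_3 scaleR_conv_of_real mult.commute)
qed

lemma chain3:
  assumes "G differentiable (at (\<gamma> t))" "(\<gamma> has_vector_derivative \<gamma>') (at t)"
  shows "((\<lambda>t. G (\<gamma> t)) has_vector_derivative (\<Sum>i\<in>UNIV. pd i G (\<gamma> t) * of_real (\<gamma>' $ i))) (at t)"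
proof -
  have D: "(G has_derivative frechet_derivative G (at (\<gamma> t))) (at (\<gamma> t) within \<gamma> ` UNIV)"
    using assms(1) frechet_derivative_works has_derivative_at_withinI by blast
  have "((G \<circ> \<gamma>) has_vector_derivative (frechet_derivative G (at (\<gamma> t)) \<gamma>')) (at t within UNIV)"
    by (rule vector_derivative_diff_chain_within[OF _ D]) (use assms(2) in simp)
  then show ?thesis by (simp add: fd_expand[OF assms(1)] o_def)
qed

definition e1 :: "real \<Rightarrow> real^3" where "e1 p = vector [- sin p, cos p, 0]"
definition e1p :: "real \<Rightarrow> real^3" where "e1p p = vector [- cos p, - sin p, 0]"

lemma sph_alt: "sph t p = (sin t * cos p) *\<^sub>R axis 1 1 + (sin t * sin p) *\<^sub>R axis 2 1 + cos t *\<^sub>R axis 3 1"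
  by (simp add: vec_eq_iff forall_3 axis_def sph_def)
lemma eth_alt: "eth t p = (cos t * cos p) *\<^sub>R axis 1 1 + (cos t * sin p) *\<^sub>R axis 2 1 + (- sin t) *\<^sub>R axis 3 1"
  by (simp add: vec_eq_iff forall_3 axis_def eth_def)
lemma e1_alt: "e1 p = (- sin p) *\<^sub>R axis 1 1 + (cos p) *\<^sub>R axis 2 1"
  by (simp add: vec_eq_iff forall_3 axis_def e1_def)
lemma eph_e1: "eph t p = sin t *\<^sub>R e1 p"
  by (simp add: vec_eq_iff forall_3 e1_def eph_def)

lemma sph_dt: "((\<lambda>t. sph t p) has_vector_derivative eth t p) (at t)"
  unfolding sph_alt eth_alt
  by (auto intro!: derivative_eq_intros simp: algebra_simps)
lemma sph_dp: "((\<lambda>p. sph t p) has_vector_derivative sin t *\<^sub>R e1 p) (at p)"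
  unfolding sph_alt e1_alt
  by (auto intro!: derivative_eq_intros simp: algebra_simps)

lemma vd_eq: "(f has_vector_derivative a) F \<Longrightarrow> a = b \<Longrightarrow> (f has_vector_derivative b) F"
  by simp

lemma comp_vd: "(\<gamma> has_vector_derivative \<gamma>') (at t) \<Longrightarrow>
   ((\<lambda>t. complex_of_real (\<gamma> t $ i)) has_vector_derivative of_real (\<gamma>' $ i)) (at t)"
  by (rule has_vector_derivative_of_real)
     (simp add: has_real_derivative_iff_has_vector_derivative bounded_linear.has_vector_derivative[OF bounded_linear_vec_nth])

lemma eth_dt: "((\<lambda>t. eth t p) has_vector_derivative - sph t p) (at t)"
  unfolding sph_alt eth_alt
  by (auto intro!: derivative_eq_intros simp: algebra_simps)
lemma eth_dp: "((\<lambda>p. eth t p) has_vector_derivative cos t *\<^sub>R e1 p) (at p)"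
  unfolding e1_alt eth_alt
  by (auto intro!: derivative_eq_intros simp: algebra_simps)
lemma e1_dp: "((\<lambda>p. e1 p) has_vector_derivative e1p p) (at p)"
proof -
  have "e1p p = (- cos p) *\<^sub>R axis 1 1 + (- sin p) *\<^sub>R axis 2 1"
    by (simp add: vec_eq_iff forall_3 axis_def e1p_def)
  then show ?thesis unfolding e1_alt
    by (auto intro!: derivative_eq_intros)
qed

definition gr :: "(real^3 \<Rightarrow> complex) \<Rightarrow> 3 \<Rightarrow> real^3 \<Rightarrow> complex" where
  "gr G = (\<lambda>i. pd i G)"

definition Tt :: "(3 \<Rightarrow> real^3 \<Rightarrow> complex) \<Rightarrow> real \<Rightarrow> real \<Rightarrow> complex" where
  "Tt W t p = (\<Sum>i\<in>UNIV. W i (sph t p) * of_real (eth t p $ i))"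
definition Te :: "(3 \<Rightarrow> real^3 \<Rightarrow> complex) \<Rightarrow> real \<Rightarrow> real \<Rightarrow> complex" where
  "Te W t p = (\<Sum>i\<in>UNIV. W i (sph t p) * of_real (e1 p $ i))"
definition Ttt :: "(3 \<Rightarrow> real^3 \<Rightarrow> complex) \<Rightarrow> real \<Rightarrow> real \<Rightarrow> complex" where
  "Ttt W t p = (\<Sum>i\<in>UNIV. Tt (gr (W i)) t p * of_real (eth t p $ i) - W i (sph t p) * of_real (sph t p $ i))"
definition Ttp :: "(3 \<Rightarrow> real^3 \<Rightarrow> complex) \<Rightarrow> real \<Rightarrow> real \<Rightarrow> complex" where
  "Ttp W t p = (\<Sum>i\<in>UNIV. of_real (sin t) * Te (gr (W i)) t p * of_real (eth t p $ i) + W i (sph t p) * of_real (cos t * e1 p $ i))"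
definition Tet :: "(3 \<Rightarrow> real^3 \<Rightarrow> complex) \<Rightarrow> real \<Rightarrow> real \<Rightarrow> complex" where
  "Tet W t p = (\<Sum>i\<in>UNIV. Tt (gr (W i)) t p * of_real (e1 p $ i))"
definition Tep :: "(3 \<Rightarrow> real^3 \<Rightarrow> complex) \<Rightarrow> real \<Rightarrow> real \<Rightarrow> complex" where
  "Tep W t p = (\<Sum>i\<in>UNIV. of_real (sin t) * Te (gr (W i)) t p * of_real (e1 p $ i) + W i (sph t p) * of_real (e1p p $ i))"

lemma gv_dt: "smooth3 G \<Longrightarrow> ((\<lambda>t. G (sph t p)) has_vector_derivative Tt (gr G) t p) (at t)"
  unfolding Tt_def gr_def by (rule chain3[OF smooth3_diff sph_dt])

lemma gv_dp: "smooth3 G \<Longrightarrow> ((\<lambda>p. G (sph t p)) has_vector_derivative of_real (sin t) * Te (gr G) t p) (at p)"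
  apply (rule vd_eq[OF chain3[OF smooth3_diff sph_dp]], assumption)
  unfolding Te_def gr_def sum_distrib_left
  by (intro sum.cong refl) (simp add: vector_scaleR_component mult_ac)

lemma Tt_lt: "(\<lambda>t. Tt W t p) = (\<lambda>t. \<Sum>i\<in>UNIV. W i (sph t p) * of_real (eth t p $ i))"
  by (simp add: Tt_def)
lemma Tt_lp: "(\<lambda>p. Tt W t p) = (\<lambda>p. \<Sum>i\<in>UNIV. W i (sph t p) * of_real (eth t p $ i))"
  by (simp add: Tt_def)
lemma Te_lt: "(\<lambda>t. Te W t p) = (\<lambda>t. \<Sum>i\<in>UNIV. W i (sph t p) * of_real (e1 p $ i))"
  by (simp add: Te_def)
lemma Te_lp: "(\<lambda>p. Te W t p) = (\<lambda>p. \<Sum>i\<in>UNIV. W i (sph t p) * of_real (e1 p $ i))"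
  by (simp add: Te_def)

lemma Tt_dt: "(\<And>i. smooth3 (W i)) \<Longrightarrow> ((\<lambda>t. Tt W t p) has_vector_derivative Ttt W t p) (at t)"
  unfolding Tt_lt[of W] Ttt_def
  apply (rule has_vector_derivative_sum)
  apply (rule vd_eq[OF has_vector_derivative_mult[OF gv_dt comp_vd[OF eth_dt]]])
  by (auto simp: algebra_simps)

lemma Tt_dp: "(\<And>i. smooth3 (W i)) \<Longrightarrow> ((\<lambda>p. Tt W t p) has_vector_derivative Ttp W t p) (at p)"
  unfolding Tt_lp[of W] Ttp_def
  apply (rule has_vector_derivative_sum)
  apply (rule vd_eq[OF has_vector_derivative_mult[OF gv_dp comp_vd[OF eth_dp]]])
  by (auto simp: algebra_simps)

lemma Te_dt: "(\<And>i. smooth3 (W i)) \<Longrightarrow> ((\<lambda>t. Te W t p) has_vector_derivative Tet W t p) (at t)"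
  unfolding Te_lt[of W] Tet_def
  apply (rule has_vector_derivative_sum)
  apply (rule vd_eq[OF has_vector_derivative_mult_left[OF gv_dt]])
  by (auto simp: algebra_simps)

lemma Te_dp: "(\<And>i. smooth3 (W i)) \<Longrightarrow> ((\<lambda>p. Te W t p) has_vector_derivative Tep W t p) (at p)"
  unfolding Te_lp[of W] Tep_def
  apply (rule has_vector_derivative_sum)
  apply (rule vd_eq[OF has_vector_derivative_mult[OF gv_dp comp_vd[OF e1_dp]]])
  by (auto simp: algebra_simps)

lemma ftc_at:
  fixes f :: "real \<Rightarrow> complex"
  assumes "a \<le> b" "\<And>x. (f has_vector_derivative f' x) (at x)"
  shows "integral {a..b} f' = f b - f a"
  by (rule integral_unique, rule fundamental_theorem_of_calculus)
     (use assms in \<open>auto intro: has_vector_derivative_at_within\<close>)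

lemma rect_integral_xy:
  fixes g gx gxy :: "real \<Rightarrow> real \<Rightarrow> complex"
  assumes dx: "\<And>x y. ((\<lambda>t. g t y) has_vector_derivative gx x y) (at x)"
  and dxy: "\<And>x y. ((\<lambda>t. gx x t) has_vector_derivative gxy x y) (at y)"
  and c1: "continuous_on UNIV (\<lambda>z. gxy (fst z) (snd z))"
  and ab: "a \<le> b" "c \<le> d"
  shows "integral (cbox (a,c) (b,d)) (\<lambda>z. gxy (fst z) (snd z)) = g b d - g b c - g a d + g a c"
proof -
  have "integral (cbox (a,c) (b,d)) (\<lambda>z. gxy (fst z) (snd z))
      = integral (cbox a b) (\<lambda>x. integral (cbox c d) (\<lambda>y. gxy x y))"
    using integral_prod_continuous[OF continuous_on_subset[OF c1, of "cbox (a,c) (b,d)"]] by simp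
  also have "\<dots> = integral {a..b} (\<lambda>x. gx x d - gx x c)"
    using ftc_at[OF ab(2) dxy] by simp
  also have "\<dots> = (g b d - g b c) - (g a d - g a c)"
    by (rule ftc_at[OF ab(1)]) (intro has_vector_derivative_diff dx)
  finally show ?thesis by simp
qed

lemma clairaut:
  fixes g gx gy gxy gyx :: "real \<Rightarrow> real \<Rightarrow> complex"
  assumes dx: "\<And>x y. ((\<lambda>t. g t y) has_vector_derivative gx x y) (at x)"
  and dy: "\<And>x y. ((\<lambda>t. g x t) has_vector_derivative gy x y) (at y)"
  and dxy: "\<And>x y. ((\<lambda>t. gx x t) has_vector_derivative gxy x y) (at y)"
  and dyx: "\<And>x y. ((\<lambda>t. gy t y) has_vector_derivative gyx x y) (at x)"
  and c1: "continuous_on UNIV (\<lambda>z. gxy (fst z) (snd z))"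
  and c2: "continuous_on UNIV (\<lambda>z. gyx (fst z) (snd z))"
  shows "gxy x0 y0 = gyx x0 y0"
proof (rule ccontr)
  assume ne: "gxy x0 y0 \<noteq> gyx x0 y0"
  define D where "D = (\<lambda>z. gxy (fst z) (snd z) - gyx (fst z) (snd z))"
  define D0 where "D0 = D (x0, y0)"
  have D0: "D0 \<noteq> 0" using ne by (simp add: D0_def D_def)
  have cD: "continuous_on UNIV D" unfolding D_def by (intro continuous_intros c1 c2)
  have rect: "integral (cbox (a,c) (b,d)) D = 0" if "a \<le> b" "c \<le> d" for a b c d
  proof -
    have i1: "integral (cbox (a,c) (b,d)) (\<lambda>z. gxy (fst z) (snd z)) = g b d - g b c - g a d + g a c"
      by (rule rect_integral_xy[OF dx dxy c1 that])
    have "integral (cbox (a,c) (b,d)) (\<lambda>z. gyx (fst z) (snd z))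
      = integral (cbox a b) (\<lambda>x. integral (cbox c d) (\<lambda>y. gyx x y))"
        using integral_prod_continuous[OF continuous_on_subset[OF c2, of "cbox (a,c) (b,d)"]] by simp
    also have "\<dots> = integral (cbox c d) (\<lambda>y. integral (cbox a b) (\<lambda>x. gyx x y))"
      by (rule integral_swap_continuous) (rule continuous_on_subset[OF c2[unfolded case_prod_beta[symmetric]]], simp)
    also have "\<dots> = integral {c..d} (\<lambda>y. gy b y - gy a y)"
      using ftc_at[OF that(1) dyx] by simp
    also have "\<dots> = (g b d - g a d) - (g b c - g a c)"
      by (rule ftc_at[OF that(2)]) (intro has_vector_derivative_diff dy)
    finally have i2: "integral (cbox (a,c) (b,d)) (\<lambda>z. gyx (fst z) (snd z)) = (g b d - g a d) - (g b c - g a c)" .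
    have "integral (cbox (a,c) (b,d)) D = integral (cbox (a,c) (b,d)) (\<lambda>z. gxy (fst z) (snd z)) - integral (cbox (a,c) (b,d)) (\<lambda>z. gyx (fst z) (snd z))"
      unfolding D_def
      by (rule integral_diff; rule integrable_continuous; rule continuous_on_subset[OF _ subset_UNIV]; fact)
    then show ?thesis using i1 i2 by simp
  qed
  define e where "e = norm D0"
  have e: "e > 0" using D0 by (simp add: e_def)
  obtain \<delta> where \<delta>: "\<delta> > 0" "\<And>z. dist z (x0,y0) < \<delta> \<Longrightarrow> dist (D z) D0 < e/2"
    using cD e unfolding continuous_on_iff D0_def
    by (metis UNIV_I half_gt_zero)
  define h where "h = \<delta>/4"
  have h: "h > 0" using \<delta> by (simp add: h_def)
  let ?B = "cbox (x0,y0) (x0+h,y0+h)"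
  have cont: "measure lborel ?B = h*h"
    using h by (simp add: content_Pair)
  have int: "((\<lambda>z. D z - D0) has_integral (0 - measure lborel ?B *\<^sub>R D0)) ?B"
    apply (rule has_integral_diff)
    using rect[of x0 "x0+h" y0 "y0+h"] h integrable_continuous[OF continuous_on_subset[OF cD subset_UNIV], of "(x0,y0)" "(x0+h,y0+h)"]
    apply (metis add_increasing2 has_integral_integral less_eq_real_def order_refl)
    by (rule has_integral_const)
  have bnd: "norm (D z - D0) \<le> e/2" if "z \<in> ?B" for z
  proof -
    obtain x y where z: "z = (x,y)" by fastforce
    have "x0 \<le> x" "x \<le> x0 + h" "y0 \<le> y" "y \<le> y0 + h" using that z by auto
    then have "dist z (x0,y0) \<le> norm (x - x0, y - y0)" by (simp add: z dist_norm)
    also have "\<dots> \<le> norm (x - x0) + norm (y - y0)" using norm_Pair_le by blast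
    also have "\<dots> \<le> h + h" using \<open>x0 \<le> x\<close> \<open>x \<le> x0 + h\<close> \<open>y0 \<le> y\<close> \<open>y \<le> y0 + h\<close> by auto
    also have "\<dots> < \<delta>" using h h_def by simp
    finally show ?thesis using \<delta>(2)[of z] by (simp add: dist_norm)
  qed
  have "norm (0 - measure lborel ?B *\<^sub>R D0) \<le> e/2 * measure lborel ?B"
    by (rule has_integral_bound[OF _ int bnd]) (use e in simp)
  then have "h*h*e \<le> e/2*(h*h)" using h by (simp add: cont e_def)
  then show False using h e by (simp add: mult_le_cancel_left)
qed

lemma cont_sph[continuous_intros]: "continuous_on S (\<lambda>z::real\<times>real. sph (fst z) (snd z))"
  unfolding sph_alt by (intro continuous_intros)
lemma cont_eth[continuous_intros]: "continuous_on S (\<lambda>z::real\<times>real. eth (fst z) (snd z) $ i)"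
  unfolding eth_alt by (intro continuous_intros)
lemma cont_e1[continuous_intros]: "continuous_on S (\<lambda>z::real\<times>real. e1 (snd z) $ i)"
  unfolding e1_alt by (intro continuous_intros)
lemma cont_e1p[continuous_intros]: "continuous_on S (\<lambda>z::real\<times>real. e1p (snd z) $ i)"
proof -
  have "e1p p = (- cos p) *\<^sub>R axis 1 1 + (- sin p) *\<^sub>R axis 2 1" for p
    by (simp add: vec_eq_iff forall_3 axis_def e1p_def)
  then show ?thesis by (simp only:) (intro continuous_intros)
qed
lemma cont_sphc[continuous_intros]: "continuous_on S (\<lambda>z::real\<times>real. sph (fst z) (snd z) $ i)"
  by (intro continuous_intros)

lemma cont_gv[continuous_intros]: "smooth3 G \<Longrightarrow> continuous_on S (\<lambda>z::real\<times>real. G (sph (fst z) (snd z)))"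
  by (rule continuous_on_compose2[OF smooth3_cont cont_sph]) auto

lemma smooth3_gr: "smooth3 G \<Longrightarrow> smooth3 (gr G i)"
  by (simp add: gr_def smooth3_pd)

lemma cont_Tt[continuous_intros]: "(\<And>i. smooth3 (W i)) \<Longrightarrow> continuous_on S (\<lambda>z::real\<times>real. Tt W (fst z) (snd z))"
  unfolding Tt_def by (intro continuous_intros) auto
lemma cont_Te[continuous_intros]: "(\<And>i. smooth3 (W i)) \<Longrightarrow> continuous_on S (\<lambda>z::real\<times>real. Te W (fst z) (snd z))"
  unfolding Te_def by (intro continuous_intros) auto
lemma cont_Ttt[continuous_intros]: "(\<And>i. smooth3 (W i)) \<Longrightarrow> continuous_on S (\<lambda>z::real\<times>real. Ttt W (fst z) (snd z))"
  unfolding Ttt_def by (intro continuous_intros smooth3_gr) auto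
lemma cont_Ttp[continuous_intros]: "(\<And>i. smooth3 (W i)) \<Longrightarrow> continuous_on S (\<lambda>z::real\<times>real. Ttp W (fst z) (snd z))"
  unfolding Ttp_def by (intro continuous_intros smooth3_gr) auto
lemma cont_Tet[continuous_intros]: "(\<And>i. smooth3 (W i)) \<Longrightarrow> continuous_on S (\<lambda>z::real\<times>real. Tet W (fst z) (snd z))"
  unfolding Tet_def by (intro continuous_intros smooth3_gr) auto
lemma cont_Tep[continuous_intros]: "(\<And>i. smooth3 (W i)) \<Longrightarrow> continuous_on S (\<lambda>z::real\<times>real. Tep W (fst z) (snd z))"
  unfolding Tep_def by (intro continuous_intros smooth3_gr) auto

lemma schwarz:
  assumes G: "smooth3 G"
  shows "Ttp (gr G) t p = of_real (cos t) * Te (gr G) t p + of_real (sin t) * Tet (gr G) t p"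
proof -
  have W: "\<And>i. smooth3 (gr G i)" using G by (rule smooth3_gr)
  show ?thesis
  proof (rule clairaut[where g="\<lambda>t p. G (sph t p)" and gx="Tt (gr G)"
        and gy="\<lambda>t p. of_real (sin t) * Te (gr G) t p"])
    show "\<And>x y. ((\<lambda>t. G (sph t y)) has_vector_derivative Tt (gr G) x y) (at x)"
      by (rule gv_dt[OF G])
    show "\<And>x y. ((\<lambda>t. G (sph x t)) has_vector_derivative of_real (sin x) * Te (gr G) x y) (at y)"
      by (rule gv_dp[OF G])
    show "\<And>x y. ((\<lambda>t. Tt (gr G) x t) has_vector_derivative Ttp (gr G) x y) (at y)"
      by (rule Tt_dp[OF W])
    show "\<And>x y. ((\<lambda>t. of_real (sin t) * Te (gr G) t y) has_vector_derivative
        of_real (cos x) * Te (gr G) x y + of_real (sin x) * Tet (gr G) x y) (at x)"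
      by (rule vd_eq[OF has_vector_derivative_mult[OF has_vector_derivative_of_real[OF DERIV_sin] Te_dt[OF W]]])
         (simp add: algebra_simps)
    show "continuous_on UNIV (\<lambda>z::real\<times>real. Ttp (gr G) (fst z) (snd z))"
      by (intro continuous_intros W)
    show "continuous_on UNIV (\<lambda>z::real\<times>real. of_real (cos (fst z)) * Te (gr G) (fst z) (snd z) + of_real (sin (fst z)) * Tet (gr G) (fst z) (snd z))"
      by (intro continuous_intros W)
  qed
qed

lemma dth_eq: "((\<lambda>t. g t p) has_vector_derivative d) (at t) \<Longrightarrow> dth g t p = d"
  by (simp add: dth_def vector_derivative_at)
lemma dph_eq: "((\<lambda>p. g t p) has_vector_derivative d) (at p) \<Longrightarrow> dph g t p = d"
  by (simp add: dph_def vector_derivative_at)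

lemma div_sin_vd:
  fixes q :: "real \<Rightarrow> complex"
  assumes "(q has_vector_derivative q') (at t)" "sin t \<noteq> 0"
  shows "((\<lambda>t. q t / of_real (sin t)) has_vector_derivative
           (q' * of_real (sin t) - q t * of_real (cos t)) / of_real (sin t)^2) (at t)"
proof -
  have d: "((\<lambda>t. inverse (sin t)) has_real_derivative - (cos t * inverse (sin t ^ 2))) (at t)"
    using DERIV_inverse_fun[OF DERIV_sin assms(2)] by (simp add: numeral_2_eq_2)
  have "((\<lambda>t. q t * of_real (inverse (sin t))) has_vector_derivative
      q t * of_real (- (cos t * inverse (sin t ^ 2))) + q' * of_real (inverse (sin t))) (at t)"
    by (rule has_vector_derivative_mult[OF assms(1) has_vector_derivative_of_real[OF d]])
  moreover have "q t * of_real (- (cos t * inverse (sin t ^ 2))) + q' * of_real (inverse (sin t))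
      = (q' * of_real (sin t) - q t * of_real (cos t)) / of_real (sin t)^2"
    using assms(2) by (simp add: field_simps eval_nat_numeral)
  moreover have "(\<lambda>t. q t * of_real (inverse (sin t))) = (\<lambda>t. q t / of_real (sin t))"
    by (simp add: divide_inverse)
  ultimately show ?thesis by simp
qed

lemma sin_pos_chart: "0 < t \<Longrightarrow> t < pi \<Longrightarrow> sin t \<noteq> 0"
  using sin_gt_zero by force

lemma pb_dt: "smooth3 G \<Longrightarrow> dth (pb G) t p = Tt (gr G) t p"
  unfolding pb_def by (rule dth_eq[OF gv_dt])
lemma pb_dp: "smooth3 G \<Longrightarrow> dph (pb G) t p = of_real (sin t) * Te (gr G) t p"
  unfolding pb_def by (rule dph_eq[OF gv_dp])

lemma sg1: "smooth3 G \<Longrightarrow> sin t \<noteq> 0 \<Longrightarrow> fst (sgrad G) t p = Te (gr G) t p"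
  by (simp add: sgrad_def pb_dp)
lemma sg2: "smooth3 G \<Longrightarrow> snd (sgrad G) t p = - Tt (gr G) t p / of_real (sin t)"
  by (simp add: sgrad_def pb_dt)

lemma sm_gr: "smooth3 G \<Longrightarrow> (\<And>i. smooth3 (gr G i))"
  by (rule smooth3_gr)

lemma sg1_dt:
  assumes G: "smooth3 G" and t: "0 < t" "t < pi"
  shows "dth (fst (sgrad G)) t p = Tet (gr G) t p"
proof (rule dth_eq, rule has_vector_derivative_transform_within_open[OF Te_dt[OF sm_gr[OF G]], of "{0<..<pi}"])
  show "\<And>y. y \<in> {0<..<pi} \<Longrightarrow> Te (gr G) y p = fst (sgrad G) y p"
    using sg1[OF G] sin_pos_chart by auto
qed (use t in auto)

lemma sg1_dp:
  assumes G: "smooth3 G" and t: "0 < t" "t < pi"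
  shows "dph (fst (sgrad G)) t p = Tep (gr G) t p"
proof -
  have "(\<lambda>p. fst (sgrad G) t p) = (\<lambda>p. Te (gr G) t p)"
    using sg1[OF G] sin_pos_chart[OF t] by auto
  then show ?thesis using Te_dp[OF sm_gr[OF G]] by (simp add: dph_def vector_derivative_at)
qed

lemma sg2_dt:
  assumes G: "smooth3 G" and t: "0 < t" "t < pi"
  shows "dth (snd (sgrad G)) t p = - ((Ttt (gr G) t p * of_real (sin t) - Tt (gr G) t p * of_real (cos t)) / of_real (sin t)^2)"
proof -
  have "((\<lambda>t. Tt (gr G) t p / of_real (sin t)) has_vector_derivative
     (Ttt (gr G) t p * of_real (sin t) - Tt (gr G) t p * of_real (cos t)) / of_real (sin t)^2) (at t)"
    by (rule div_sin_vd[OF Tt_dt[OF sm_gr[OF G]] sin_pos_chart[OF t]])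
  then have "((\<lambda>t. snd (sgrad G) t p) has_vector_derivative
     - ((Ttt (gr G) t p * of_real (sin t) - Tt (gr G) t p * of_real (cos t)) / of_real (sin t)^2)) (at t)"
    using has_vector_derivative_minus by (fastforce simp: sg2[OF G])
  then show ?thesis by (rule dth_eq)
qed

lemma sg2_dp:
  assumes G: "smooth3 G"
  shows "dph (snd (sgrad G)) t p = - (Ttp (gr G) t p / of_real (sin t))"
proof -
  have "((\<lambda>p. snd (sgrad G) t p) has_vector_derivative - (Ttp (gr G) t p / of_real (sin t))) (at p)"
    unfolding sg2[OF G]
    by (rule vd_eq[OF has_vector_derivative_divide[OF has_vector_derivative_minus[OF Tt_dp[OF sm_gr[OF G]]]]]) simp
  then show ?thesis by (rule dph_eq)
qed

lemma LB_eq: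
  assumes G: "smooth3 G" and t: "0 < t" "t < pi"
  shows "LB (pb G) t p = (of_real (cos t) * Tt (gr G) t p + of_real (sin t) * Ttt (gr G) t p) / of_real (sin t)
        + of_real (sin t) * Tep (gr G) t p / of_real ((sin t)\<^sup>2)"
proof -
  have 1: "dth (\<lambda>t p. of_real (sin t) * dth (pb G) t p) t p = of_real (cos t) * Tt (gr G) t p + of_real (sin t) * Ttt (gr G) t p"
    unfolding pb_dt[OF G]
    by (rule dth_eq, rule vd_eq[OF has_vector_derivative_mult[OF has_vector_derivative_of_real[OF DERIV_sin] Tt_dt[OF sm_gr[OF G]]]])
       (simp add: algebra_simps)
  have 2: "dph (dph (pb G)) t p = of_real (sin t) * Tep (gr G) t p"
    unfolding pb_dp[OF G, abs_def]
    by (rule dph_eq, intro derivative_intros Te_dp sm_gr[OF G])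
  show ?thesis unfolding LB_def 1 2 ..
qed

lemma eth_norm: "of_real (eth t p $ 1) * of_real (eth t p $ 1) + of_real (eth t p $ 2) * of_real (eth t p $ 2)
   + of_real (eth t p $ 3) * of_real (eth t p $ 3) = (1::complex)"
proof -
  have a: "cos p * cos p + sin p * sin p = 1" "cos t * cos t + sin t * sin t = 1"
    using sin_cos_squared_add[of p] sin_cos_squared_add[of t] by (simp_all add: power2_eq_square)
  have "eth t p $ 1 * eth t p $ 1 + eth t p $ 2 * eth t p $ 2 + eth t p $ 3 * eth t p $ 3 = 1"
    using a by (simp add: eth_def, algebra)
  then have "complex_of_real (eth t p $ 1 * eth t p $ 1 + eth t p $ 2 * eth t p $ 2 + eth t p $ 3 * eth t p $ 3) = 1"
    by simp
  then show ?thesis by (simp only: of_real_add of_real_mult)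
qed

lemma eth_eph: "of_real (eph t p $ 1) * of_real (eth t p $ 1) + of_real (eph t p $ 2) * of_real (eth t p $ 2)
   + of_real (eph t p $ 3) * of_real (eth t p $ 3) = (0::complex)"
proof -
  have "eph t p $ 1 * eth t p $ 1 + eph t p $ 2 * eth t p $ 2 + eph t p $ 3 * eth t p $ 3 = 0"
    by (simp add: eth_def eph_def algebra_simps)
  then have "complex_of_real (eph t p $ 1 * eth t p $ 1 + eph t p $ 2 * eth t p $ 2 + eph t p $ 3 * eth t p $ 3) = 0"
    by simp
  then show ?thesis by (simp only: of_real_add of_real_mult)
qed

lemma eth_e1: "of_real (eth t p $ 1) * of_real (e1 p $ 1) + of_real (eth t p $ 2) * of_real (e1 p $ 2)
   + of_real (eth t p $ 3) * of_real (e1 p $ 3) = (0::complex)"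
proof -
  have "eth t p $ 1 * e1 p $ 1 + eth t p $ 2 * e1 p $ 2 + eth t p $ 3 * e1 p $ 3 = 0"
    by (simp add: eth_def e1_def algebra_simps)
  then have "complex_of_real (eth t p $ 1 * e1 p $ 1 + eth t p $ 2 * e1 p $ 2 + eth t p $ 3 * e1 p $ 3) = 0"
    by simp
  then show ?thesis by (simp only: of_real_add of_real_mult)
qed

lemma eph_e1': "of_real (eph t p $ 1) * of_real (e1 p $ 1) + of_real (eph t p $ 2) * of_real (e1 p $ 2)
   + of_real (eph t p $ 3) * of_real (e1 p $ 3) = (of_real (sin t)::complex)"
proof -
  have a: "cos p * cos p + sin p * sin p = 1"
    using sin_cos_squared_add[of p] by (simp_all add: power2_eq_square)
  have "eph t p $ 1 * e1 p $ 1 + eph t p $ 2 * e1 p $ 2 + eph t p $ 3 * e1 p $ 3 = sin t"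
    using a by (simp add: eph_def e1_def, algebra)
  then have "complex_of_real (eph t p $ 1 * e1 p $ 1 + eph t p $ 2 * e1 p $ 2 + eph t p $ 3 * e1 p $ 3) = of_real (sin t)"
    by simp
  then show ?thesis by (simp only: of_real_add of_real_mult)
qed

locale wfld =
  fixes w :: vf and V :: "3 \<Rightarrow> real^3 \<Rightarrow> complex"
  assumes V: "\<And>i. smooth3 (V i)"
  and rel: "\<And>t p i. 0 < t \<Longrightarrow> t < pi \<Longrightarrow>
        V i (sph t p) = fst w t p * of_real (eth t p $ i) + snd w t p * of_real (eph t p $ i)"
begin

lemma w1: assumes "0 < t" "t < pi" shows "fst w t p = Tt V t p"
proof -
  have "Tt V t p = fst w t p * (of_real (eth t p $ 1) * of_real (eth t p $ 1) + of_real (eth t p $ 2) * of_real (eth t p $ 2)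
   + of_real (eth t p $ 3) * of_real (eth t p $ 3)) + snd w t p * (of_real (eph t p $ 1) * of_real (eth t p $ 1) + of_real (eph t p $ 2) * of_real (eth t p $ 2)
   + of_real (eph t p $ 3) * of_real (eth t p $ 3))"
    unfolding Tt_def sum_3 rel[OF assms] by (simp add: algebra_simps)
  then show ?thesis by (simp add: eth_norm eth_eph)
qed

lemma w2: assumes "0 < t" "t < pi" shows "snd w t p = Te V t p / of_real (sin t)"
proof -
  have "Te V t p = fst w t p * (of_real (eth t p $ 1) * of_real (e1 p $ 1) + of_real (eth t p $ 2) * of_real (e1 p $ 2)
   + of_real (eth t p $ 3) * of_real (e1 p $ 3)) + snd w t p * (of_real (eph t p $ 1) * of_real (e1 p $ 1) + of_real (eph t p $ 2) * of_real (e1 p $ 2)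
   + of_real (eph t p $ 3) * of_real (e1 p $ 3))"
    unfolding Te_def sum_3 rel[OF assms] by (simp add: algebra_simps)
  then show ?thesis using sin_pos_chart[OF assms] by (simp add: eth_e1 eph_e1')
qed

lemma w1_dt: assumes t: "0 < t" "t < pi" shows "dth (fst w) t p = Ttt V t p"
proof (rule dth_eq, rule has_vector_derivative_transform_within_open[OF Tt_dt[OF V], of "{0<..<pi}"])
  show "\<And>y. y \<in> {0<..<pi} \<Longrightarrow> Tt V y p = fst w y p" using w1 by auto
qed (use t in auto)

lemma w1_dp: assumes t: "0 < t" "t < pi" shows "dph (fst w) t p = Ttp V t p"
proof -
  have "(\<lambda>p. fst w t p) = (\<lambda>p. Tt V t p)" using w1[OF t] by auto
  then show ?thesis using Tt_dp[OF V] by (simp add: dph_def vector_derivative_at)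
qed

lemma w2_dt: assumes t: "0 < t" "t < pi"
  shows "dth (snd w) t p = (Tet V t p * of_real (sin t) - Te V t p * of_real (cos t)) / of_real (sin t)^2"
proof (rule dth_eq, rule has_vector_derivative_transform_within_open[OF div_sin_vd[OF Te_dt[OF V] sin_pos_chart[OF t]], of "{0<..<pi}"])
  show "\<And>y. y \<in> {0<..<pi} \<Longrightarrow> Te V y p / of_real (sin y) = snd w y p" using w2 by auto
qed (use t in auto)

lemma w2_dp: assumes t: "0 < t" "t < pi" shows "dph (snd w) t p = Tep V t p / of_real (sin t)"
proof -
  have "(\<lambda>p. snd w t p) = (\<lambda>p. Te V t p / of_real (sin t))" using w2[OF t] by auto
  then show ?thesis using has_vector_derivative_divide[OF Te_dp[OF V]] by (simp add: dph_def vector_derivative_at)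
qed

lemma divg_eq: assumes t: "0 < t" "t < pi"
  shows "divg w t p = (of_real (cos t) * Tt V t p + of_real (sin t) * Ttt V t p) / of_real (sin t) + Tep V t p / of_real (sin t)"
proof -
  have "dth (\<lambda>t p. of_real (sin t) * fst w t p) t p = of_real (cos t) * Tt V t p + of_real (sin t) * Ttt V t p"
  proof (rule dth_eq, rule has_vector_derivative_transform_within_open[of "\<lambda>t. of_real (sin t) * Tt V t p" _ _ "{0<..<pi}"])
    show "((\<lambda>t. complex_of_real (sin t) * Tt V t p) has_vector_derivative
        complex_of_real (cos t) * Tt V t p + complex_of_real (sin t) * Ttt V t p) (at t)"
      by (rule vd_eq[OF has_vector_derivative_mult[OF has_vector_derivative_of_real[OF DERIV_sin] Tt_dt[OF V]]])
         (simp add: algebra_simps)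
    show "\<And>y. y \<in> {0<..<pi} \<Longrightarrow> complex_of_real (sin y) * Tt V y p = complex_of_real (sin y) * fst w y p"
      using w1 by auto
  qed (use t in auto)
  then show ?thesis unfolding divg_def w2_dp[OF t] by simp
qed

end

definition J1p :: "complex \<Rightarrow> complex \<Rightarrow> complex \<Rightarrow> complex \<Rightarrow> complex \<Rightarrow> complex \<Rightarrow> complex \<Rightarrow> complex \<Rightarrow> complex \<Rightarrow> complex \<Rightarrow> complex \<Rightarrow> complex \<Rightarrow> complex \<Rightarrow> complex \<Rightarrow> complex \<Rightarrow> complex \<Rightarrow> complex \<Rightarrow> complex \<Rightarrow> complex \<Rightarrow> complex \<Rightarrow> complex \<Rightarrow> complex \<Rightarrow> complex" where
  "J1p c s A At Ap B Bt Bp f ft fe ftt ftp fet fep h ht he htt htp het hep = (A * c * ft * ht - A * fe * het * s - A * ft * htt * s - Ap * fe * ht + At * fe * he * s + B * c * ft * he - B * fe * hep - B * ft * htp + Bp * ft * ht - Bt * ft * he * s)"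

definition Pp :: "complex \<Rightarrow> complex \<Rightarrow> complex \<Rightarrow> complex \<Rightarrow> complex \<Rightarrow> complex \<Rightarrow> complex \<Rightarrow> complex \<Rightarrow> complex \<Rightarrow> complex \<Rightarrow> complex \<Rightarrow> complex" where
  "Pp kap lam s A B f ft fe h ht he = (- kap * s * (A * ht + B * he) * ft - lam * s * (A * ft + B * fe) * ht - lam * kap * s * A * f * h)"

definition Qp :: "complex \<Rightarrow> complex \<Rightarrow> complex \<Rightarrow> complex \<Rightarrow> complex \<Rightarrow> complex \<Rightarrow> complex \<Rightarrow> complex \<Rightarrow> complex \<Rightarrow> complex \<Rightarrow> complex" where
  "Qp kap lam A B f ft fe h ht he = (- kap * (A * ht + B * he) * fe - lam * (A * ft + B * fe) * he - lam * kap * B * f * h)"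

definition Ptp :: "complex \<Rightarrow> complex \<Rightarrow> complex \<Rightarrow> complex \<Rightarrow> complex \<Rightarrow> complex \<Rightarrow> complex \<Rightarrow> complex \<Rightarrow> complex \<Rightarrow> complex \<Rightarrow> complex \<Rightarrow> complex \<Rightarrow> complex \<Rightarrow> complex \<Rightarrow> complex \<Rightarrow> complex \<Rightarrow> complex \<Rightarrow> complex \<Rightarrow> complex" where
  "Ptp kap lam c s A At B Bt f ft fe ftt fet h ht he htt het = (- A * c * f * h * kap * lam - A * c * ft * ht * kap - A * c * ft * ht * lam - A * f * ht * kap * lam * s - A * ft * h * kap * lam * s - A * ft * htt * kap * s - A * ft * htt * lam * s - A * ftt * ht * kap * s - A * ftt * ht * lam * s - At * f * h * kap * lam * s - At * ft * ht * kap * s - At * ft * ht * lam * s - B * c * fe * ht * lam - B * c * ft * he * kap - B * fe * htt * lam * s - B * fet * ht * lam * s - B * ft * het * kap * s - B * ftt * he * kap * s - Bt * fe * ht * lam * s - Bt * ft * he * kap * s)"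

definition Qfp :: "complex \<Rightarrow> complex \<Rightarrow> complex \<Rightarrow> complex \<Rightarrow> complex \<Rightarrow> complex \<Rightarrow> complex \<Rightarrow> complex \<Rightarrow> complex \<Rightarrow> complex \<Rightarrow> complex \<Rightarrow> complex \<Rightarrow> complex \<Rightarrow> complex \<Rightarrow> complex \<Rightarrow> complex \<Rightarrow> complex \<Rightarrow> complex" where
  "Qfp kap lam s A Ap B Bp f ft fe ftp fep h ht he htp hep = (- A * fe * htp * kap - A * fep * ht * kap - A * ft * hep * lam - A * ftp * he * lam - Ap * fe * ht * kap - Ap * ft * he * lam - B * f * he * kap * lam * s - B * fe * h * kap * lam * s - B * fe * hep * kap - B * fe * hep * lam - B * fep * he * kap - B * fep * he * lam - Bp * f * h * kap * lam - Bp * fe * he * kap - Bp * fe * he * lam)"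

lemma alg_gm:
  fixes c s A At Ap B Bt Bp f ft fe ftt ftp fet fep h ht he htt htp het hep :: complex
  assumes "s \<noteq> 0"
  shows "(fe * (he * At + (- ht / s) * Ap - A * het - (B / s) * hep) + s^2 * ((- ft / s) * (he * ((Bt * s - B * c) / s^2) + (- ht / s) * (Bp / s) - A * (- ((htt * s - ht * c) / s^2)) - (B / s) * (- (htp / s))))) * s
     = J1p c s A At Ap B Bt Bp f ft fe ftt ftp fet fep h ht he htt htp het hep"
  unfolding J1p_def using assms by (simp add: field_simps power2_eq_square)

lemma alg_main:
  fixes c s A At Ap B Bt Bp f ft fe ftt ftp fet fep h ht he htt htp het hep kap lam :: complex
  assumes "ftp = c * fe + s * fet" "htp = c * he + s * het" "fep = - (lam * s * f) - c * ft - s * ftt"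
    "hep = - (kap * s * h) - c * ht - s * htt" "Bp = - (c * A) - s * At"
  shows "kap * J1p c s A At Ap B Bt Bp f ft fe ftt ftp fet fep h ht he htt htp het hep
       + lam * J1p c s A At Ap B Bt Bp h ht he htt htp het hep f ft fe ftt ftp fet fep
       = Ptp kap lam c s A At B Bt f ft fe ftt fet h ht he htt het + Qfp kap lam s A Ap B Bp f ft fe ftp fep h ht he htp hep"
  unfolding J1p_def Ptp_def Qfp_def assms by (simp add: algebra_simps)

definition jJ :: "(real^3 \<Rightarrow> complex) \<Rightarrow> (real^3 \<Rightarrow> complex) \<Rightarrow> (3 \<Rightarrow> real^3 \<Rightarrow> complex) \<Rightarrow> real \<Rightarrow> real \<Rightarrow> complex" where
  "jJ F H V t p = J1p (of_real (cos t)) (of_real (sin t)) (Tt V t p) (Ttt V t p) (Ttp V t p) (Te V t p) (Tet V t p) (Tep V t p)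
     (F (sph t p)) (Tt (gr F) t p) (Te (gr F) t p) (Ttt (gr F) t p) (Ttp (gr F) t p) (Tet (gr F) t p) (Tep (gr F) t p)
     (H (sph t p)) (Tt (gr H) t p) (Te (gr H) t p) (Ttt (gr H) t p) (Ttp (gr H) t p) (Tet (gr H) t p) (Tep (gr H) t p)"

context wfld begin

lemma gm_J:
  assumes F: "smooth3 F" and H: "smooth3 H" and t: "0 < t" "t < pi"
  shows "gmet (sgrad F) (bracket (sgrad H) w) t p * of_real (sin t) = jJ F H V t p"
proof -
  have s: "complex_of_real (sin t) \<noteq> 0" using sin_pos_chart[OF t] by simp
  show ?thesis
    unfolding gmet_def bracket_def fst_conv snd_conv of_real_power jJ_def
    unfolding sg1[OF F sin_pos_chart[OF t]] sg2[OF F] sg1[OF H sin_pos_chart[OF t]] sg2[OF H]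
      sg1_dt[OF H t] sg1_dp[OF H t] sg2_dt[OF H t] sg2_dp[OF H]
      w1[OF t] w2[OF t] w1_dt[OF t] w1_dp[OF t] w2_dt[OF t] w2_dp[OF t]
    by (rule alg_gm[OF s])
qed

end


lemma eig_alg:
  fixes s c f ft ftt fep lam :: complex
  assumes "s \<noteq> 0" "(c * ft + s * ftt) / s + s * fep / s^2 = - lam * f"
  shows "fep = - (lam * s * f) - c * ft - s * ftt"
proof -
  have "s * fep / s^2 = fep / s" using assms(1) by (simp add: power2_eq_square)
  then have "(c * ft + s * ftt + fep) / s = - lam * f" using assms(2) by (simp add: add_divide_distrib)
  then have "c * ft + s * ftt + fep = - lam * f * s" using assms(1) by (simp add: divide_eq_eq)
  then show ?thesis by algebra
qed

lemma div_alg: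
  fixes s c A At Bp :: complex
  assumes "s \<noteq> 0" "(c * A + s * At) / s + Bp / s = 0"
  shows "Bp = - (c * A) - s * At"
proof -
  have "(c * A + s * At + Bp) / s = 0" using assms(2) by (simp add: add_divide_distrib)
  then have "c * A + s * At + Bp = 0" using assms(1) by simp
  then show ?thesis by algebra
qed

lemma eig_jet:
  assumes G: "smooth3 G" and t: "0 < t" "t < pi"
    and e: "LB (pb G) t p = - lam * pb G t p"
  shows "Tep (gr G) t p = - (lam * of_real (sin t) * G (sph t p)) - of_real (cos t) * Tt (gr G) t p - of_real (sin t) * Ttt (gr G) t p"
  apply (rule eig_alg)
  using sin_pos_chart[OF t] apply simp
  using e unfolding LB_eq[OF G t] pb_def of_real_power by simp

lemma (in wfld) div_jet:
  assumes t: "0 < t" "t < pi" and d: "divg w t p = 0"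
  shows "Tep V t p = - (of_real (cos t) * Tt V t p) - of_real (sin t) * Ttt V t p"
  apply (rule div_alg)
  using sin_pos_chart[OF t] apply simp
  using d unfolding divg_eq[OF t] by simp

definition jP where
  "jP kap lam F H V t p = Pp kap lam (of_real (sin t)) (Tt V t p) (Te V t p)
     (F (sph t p)) (Tt (gr F) t p) (Te (gr F) t p) (H (sph t p)) (Tt (gr H) t p) (Te (gr H) t p)"
definition jQ where
  "jQ kap lam F H V t p = Qp kap lam (Tt V t p) (Te V t p)
     (F (sph t p)) (Tt (gr F) t p) (Te (gr F) t p) (H (sph t p)) (Tt (gr H) t p) (Te (gr H) t p)"
definition jPt where
  "jPt kap lam F H V t p = Ptp kap lam (of_real (cos t)) (of_real (sin t)) (Tt V t p) (Ttt V t p) (Te V t p) (Tet V t p)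
     (F (sph t p)) (Tt (gr F) t p) (Te (gr F) t p) (Ttt (gr F) t p) (Tet (gr F) t p)
     (H (sph t p)) (Tt (gr H) t p) (Te (gr H) t p) (Ttt (gr H) t p) (Tet (gr H) t p)"
definition jQf where
  "jQf kap lam F H V t p = Qfp kap lam (of_real (sin t)) (Tt V t p) (Ttp V t p) (Te V t p) (Tep V t p)
     (F (sph t p)) (Tt (gr F) t p) (Te (gr F) t p) (Ttp (gr F) t p) (Tep (gr F) t p)
     (H (sph t p)) (Tt (gr H) t p) (Te (gr H) t p) (Ttp (gr H) t p) (Tep (gr H) t p)"

lemma jP_dt:
  assumes F: "smooth3 F" and H: "smooth3 H" and V: "\<And>i. smooth3 (V i)"
  shows "((\<lambda>t. jP kap lam F H V t p) has_vector_derivative jPt kap lam F H V t p) (at t)"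
  unfolding jP_def jPt_def Pp_def Ptp_def
  by (auto intro!: derivative_eq_intros Tt_dt Te_dt gv_dt sm_gr F H V simp: algebra_simps)

lemma jQ_dp:
  assumes F: "smooth3 F" and H: "smooth3 H" and V: "\<And>i. smooth3 (V i)"
  shows "((\<lambda>p. jQ kap lam F H V t p) has_vector_derivative jQf kap lam F H V t p) (at p)"
  unfolding jQ_def jQf_def Qp_def Qfp_def
  by (auto intro!: derivative_eq_intros Tt_dp Te_dp gv_dp sm_gr F H V simp: algebra_simps)

lemma cont_jPt:
  assumes F: "smooth3 F" and H: "smooth3 H" and V: "\<And>i. smooth3 (V i)"
  shows "continuous_on S (\<lambda>z::real\<times>real. jPt kap lam F H V (fst z) (snd z))"
  unfolding jPt_def Ptp_def by (intro continuous_intros sm_gr F H V)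

lemma cont_jQf:
  assumes F: "smooth3 F" and H: "smooth3 H" and V: "\<And>i. smooth3 (V i)"
  shows "continuous_on S (\<lambda>z::real\<times>real. jQf kap lam F H V (fst z) (snd z))"
  unfolding jQf_def Qfp_def by (intro continuous_intros sm_gr F H V)

lemma cont_jJ:
  assumes F: "smooth3 F" and H: "smooth3 H" and V: "\<And>i. smooth3 (V i)"
  shows "continuous_on S (\<lambda>z::real\<times>real. jJ F H V (fst z) (snd z))"
  unfolding jJ_def J1p_def by (intro continuous_intros sm_gr F H V)

lemma Tt_2pi: "Tt W t (2*pi) = Tt W t 0"
  by (simp add: Tt_def sph_def eth_def)
lemma Te_2pi: "Te W t (2*pi) = Te W t 0"
  by (simp add: Te_def sph_def e1_def)
lemma sph_2pi: "sph t (2*pi) = sph t 0"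
  by (simp add: sph_def)

lemma jQ_2pi: "jQ kap lam F H V t (2*pi) = jQ kap lam F H V t 0"
  unfolding jQ_def Tt_2pi Te_2pi sph_2pi ..

lemma jP_0: "jP kap lam F H V 0 p = 0" and jP_pi: "jP kap lam F H V pi p = 0"
  by (simp_all add: jP_def Pp_def)

lemma neg_line: "negligible {z::real\<times>real. fst z = a}"
proof -
  have "{z::real\<times>real. fst z = a} = {x. (1::real, 0::real) \<bullet> x = a}"
    by (auto simp: inner_Pair)
  moreover have "(1::real, 0::real) \<noteq> 0" by (simp add: zero_prod_def)
  ultimately show ?thesis using negligible_hyperplane[of "(1::real, 0::real)" a] by simp
qed

lemma box_chart:
  assumes "z \<in> cbox (0::real,0::real) (pi,2*pi) - ({z. fst z = 0} \<union> {z. fst z = pi})"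
  shows "0 < fst z" "fst z < pi"
  using assms by (auto simp: cbox_Pair_eq less_eq_real_def)

lemma int_jPt:
  assumes F: "smooth3 F" and H: "smooth3 H" and V: "\<And>i. smooth3 (V i)"
  shows "integral (cbox (0,0) (pi,2*pi)) (\<lambda>z. jPt kap lam F H V (fst z) (snd z)) = 0"
proof -
  have c: "continuous_on (cbox (0,0) (pi,2*pi)) (\<lambda>z::real\<times>real. jPt kap lam F H V (fst z) (snd z))"
    by (rule cont_jPt[OF F H V])
  have "integral (cbox (0,0) (pi,2*pi)) (\<lambda>z. jPt kap lam F H V (fst z) (snd z))
      = integral (cbox 0 pi) (\<lambda>x. integral (cbox 0 (2*pi)) (\<lambda>y. jPt kap lam F H V x y))"
    using integral_prod_continuous[OF c] by simp
  also have "\<dots> = integral (cbox 0 (2*pi)) (\<lambda>y. integral (cbox 0 pi) (\<lambda>x. jPt kap lam F H V x y))"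
    by (rule integral_swap_continuous) (use c in \<open>simp add: case_prod_unfold\<close>)
  also have "\<dots> = integral {0..2*pi} (\<lambda>y. jP kap lam F H V pi y - jP kap lam F H V 0 y)"
    using ftc_at[OF pi_ge_zero jP_dt[OF F H V]] by simp
  also have "\<dots> = 0" by (simp add: jP_0 jP_pi)
  finally show ?thesis .
qed

lemma int_jQf:
  assumes F: "smooth3 F" and H: "smooth3 H" and V: "\<And>i. smooth3 (V i)"
  shows "integral (cbox (0,0) (pi,2*pi)) (\<lambda>z. jQf kap lam F H V (fst z) (snd z)) = 0"
proof -
  have c: "continuous_on (cbox (0,0) (pi,2*pi)) (\<lambda>z::real\<times>real. jQf kap lam F H V (fst z) (snd z))"
    by (rule cont_jQf[OF F H V])
  have "integral (cbox (0,0) (pi,2*pi)) (\<lambda>z. jQf kap lam F H V (fst z) (snd z))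
      = integral (cbox 0 pi) (\<lambda>x. integral (cbox 0 (2*pi)) (\<lambda>y. jQf kap lam F H V x y))"
    using integral_prod_continuous[OF c] by simp
  also have "\<dots> = integral {0..pi} (\<lambda>x. jQ kap lam F H V x (2*pi) - jQ kap lam F H V x 0)"
  proof -
    have "(2::real)*pi \<ge> 0" by simp
    then show ?thesis using ftc_at[OF \<open>(2::real)*pi \<ge> 0\<close> jQ_dp[OF F H V]] by simp
  qed
  also have "\<dots> = 0" by (simp add: jQ_2pi)
  finally show ?thesis .
qed

context wfld begin

lemma ip_J:
  assumes F: "smooth3 F" and H: "smooth3 H"
  shows "ip (sgrad F) (bracket (sgrad H) w) = integral (cbox (0,0) (pi,2*pi)) (\<lambda>z. jJ F H V (fst z) (snd z))"
  unfolding ip_def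
proof (rule integral_spike[where S="{z. fst z = 0} \<union> {z. fst z = pi}"])
  show "negligible ({z::real\<times>real. fst z = 0} \<union> {z. fst z = pi})"
    by (intro negligible_Un neg_line)
  fix z assume z: "z \<in> cbox (0,0) (pi,2*pi) - ({z::real\<times>real. fst z = 0} \<union> {z. fst z = pi})"
  obtain a b where ab: "z = (a,b)" by fastforce
  show "jJ F H V (fst z) (snd z) = (case z of (\<theta>, \<phi>) \<Rightarrow> gmet (sgrad F) (bracket (sgrad H) w) \<theta> \<phi> * complex_of_real (sin \<theta>))"
    using gm_J[OF F H box_chart[OF z]] by (simp add: ab)
qed

end

theorem lemma5:
  fixes l k :: nat and F H :: "real^3 \<Rightarrow> complex"
  assumes "l \<ge> 1" and "k \<ge> 1" and "F \<in> Yl l" and "H \<in> Yl k"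
  shows "\<forall>w\<in>SVect.
           of_nat (k * (k + 1)) * ip (sgrad F) (bracket (sgrad H) w)
         = - of_nat (l * (l + 1)) * ip (sgrad H) (bracket (sgrad F) w)"
proof
  fix w assume "w \<in> SVect"
  then have sv: "smooth_vf w" and dv: "\<And>t p. 0 < t \<Longrightarrow> t < pi \<Longrightarrow> divg w t p = 0"
    unfolding SVect_def chart_def by auto
  from sv obtain V :: "3 \<Rightarrow> real^3 \<Rightarrow> complex" where V: "\<And>i. smooth3 (V i)"
    and rel0: "\<forall>(\<theta>,\<phi>)\<in>chart. \<forall>i. V i (sph \<theta> \<phi>) =
        fst w \<theta> \<phi> * of_real (eth \<theta> \<phi> $ i) + snd w \<theta> \<phi> * of_real (eph \<theta> \<phi> $ i)"
    unfolding smooth_vf_def by blast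
  interpret wfld w V
    by unfold_locales (use V rel0 in \<open>auto simp: chart_def\<close>)
  have F: "smooth3 F" and eF: "\<And>t p. 0 < t \<Longrightarrow> t < pi \<Longrightarrow> LB (pb F) t p = - of_nat (l * (l + 1)) * pb F t p"
    using assms(3) unfolding Yl_def chart_def by auto
  have H: "smooth3 H" and eH: "\<And>t p. 0 < t \<Longrightarrow> t < pi \<Longrightarrow> LB (pb H) t p = - of_nat (k * (k + 1)) * pb H t p"
    using assms(4) unfolding Yl_def chart_def by auto
  define kap :: complex where "kap = of_nat (k * (k + 1))"
  define lam :: complex where "lam = of_nat (l * (l + 1))"
  let ?B = "cbox (0::real,0::real) (pi,2*pi)"
  let ?J1 = "\<lambda>z. jJ F H V (fst z) (snd z)"
  let ?J2 = "\<lambda>z. jJ H F V (fst z) (snd z)"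
  have cJ1: "?J1 integrable_on ?B" by (rule integrable_continuous, rule cont_jJ[OF F H V])
  have cJ2: "?J2 integrable_on ?B" by (rule integrable_continuous, rule cont_jJ[OF H F V])
  have cP: "(\<lambda>z. jPt kap lam F H V (fst z) (snd z)) integrable_on ?B"
    by (rule integrable_continuous, rule cont_jPt[OF F H V])
  have cQ: "(\<lambda>z. jQf kap lam F H V (fst z) (snd z)) integrable_on ?B"
    by (rule integrable_continuous, rule cont_jQf[OF F H V])
  have pt: "kap * jJ F H V t p + lam * jJ H F V t p = jPt kap lam F H V t p + jQf kap lam F H V t p"
    if t: "0 < t" "t < pi" for t p
    unfolding jJ_def jPt_def jQf_def
    by (rule alg_main[OF schwarz[OF F] schwarz[OF H] eig_jet[OF F t] eig_jet[OF H t] div_jet[OF t dv[OF t]]])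
       (use eF[OF t] eH[OF t] in \<open>simp_all add: kap_def lam_def\<close>)
  have "kap * ip (sgrad F) (bracket (sgrad H) w) + lam * ip (sgrad H) (bracket (sgrad F) w)
      = kap * integral ?B ?J1 + lam * integral ?B ?J2"
    by (simp add: ip_J[OF F H] ip_J[OF H F])
  also have "\<dots> = integral ?B (\<lambda>z. kap * ?J1 z + lam * ?J2 z)"
    by (subst integral_add[OF integrable_on_mult_right[OF cJ1] integrable_on_mult_right[OF cJ2]]) simp
  also have "\<dots> = integral ?B (\<lambda>z. jPt kap lam F H V (fst z) (snd z) + jQf kap lam F H V (fst z) (snd z))"
  proof (rule integral_spike[where S="{z. fst z = 0} \<union> {z. fst z = pi}"])
    show "negligible ({z::real\<times>real. fst z = 0} \<union> {z. fst z = pi})"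
      by (intro negligible_Un neg_line)
    fix z assume z: "z \<in> ?B - ({z::real\<times>real. fst z = 0} \<union> {z. fst z = pi})"
    show "jPt kap lam F H V (fst z) (snd z) + jQf kap lam F H V (fst z) (snd z) = kap * ?J1 z + lam * ?J2 z"
      using pt[OF box_chart[OF z]] by simp
  qed
  also have "\<dots> = integral ?B (\<lambda>z. jPt kap lam F H V (fst z) (snd z)) + integral ?B (\<lambda>z. jQf kap lam F H V (fst z) (snd z))"
    by (rule integral_add[OF cP cQ])
  also have "\<dots> = 0" by (simp add: int_jPt[OF F H V] int_jQf[OF F H V])
  finally have "kap * ip (sgrad F) (bracket (sgrad H) w) + lam * ip (sgrad H) (bracket (sgrad F) w) = 0" .
  then have "kap * ip (sgrad F) (bracket (sgrad H) w) = - (lam * ip (sgrad H) (bracket (sgrad F) w))"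
    by (simp only: eq_neg_iff_add_eq_0)
  then show "of_nat (k * (k + 1)) * ip (sgrad F) (bracket (sgrad H) w)
         = - of_nat (l * (l + 1)) * ip (sgrad H) (bracket (sgrad F) w)"
    unfolding kap_def lam_def mult_minus_left .
qed

end
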